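(* In the epoch setting described in the context, at least a $\frac{1}{12}$ fraction of the tuples in $S^{(1)}\times S^{(2)}\times\cdots\times S^{(\rho)}$ are $I$-covering for every $I\in\mathcal{I}$ (simultaneously).
   Context: Let $n\ge 2$ and $k\ge1$, $\Delta$ be natural numbers, $\mathcal{G}=\langle G_1,\dots,G_L\rangle$ a temporal graph (sequence of graphs on a common $n$-element vertex set $V$), and $T$ a spanning tree of its underlying graph (the union of the snapshots). A snapshot is $k$-edge-deficient w.r.t. $T$ if it contains all but at most $k$ edges of $T$. Let $N=2(n-1)$, fix a DFS tour of $T$ from a root $r$ traversing each edge twice, with cyclic vertex sequence $(v_1,\dots,v_{N+1})$, $v_{N+1}=v_1=r$, tour edges $e_q=\{v_q,v_{q+1}\}$. Circular intervals: $[\![i,j]\!]=\{i,\dots,j\}$ if $i\le j$, $\{i,\dots,N,1,\dots,j\}$ if $i>j$; $[\![i,j[\![=[\![i,j]\!]\setminus\{j\}$. Roundabout process on a sequence $H_1,\dots,H_t$ of graphs: agents $a_1,\dots,a_N$, $s_i(0)=i$; at step $\tau$, if $s_i(\tau-1)=q$ then $s_i(\tau)=(q\bmod N)+1$ if $e_q\in E(H_\tau)$, else $q$; visited states $D_i(\tau)=[\![i,s_i(\tau)]\!]$, $D_i(0)=\{i\}$; active sets $A(0)=$ all agents, and $A(\tau)$ is obtained from $A(\tau-1)$ by repeatedly removing an arbitrary agent $a_i$ with $D_i(\tau)\subseteq\bigcup D_j(\tau)$ over the other current agents, until none remains. Let $t=\lfloor N/(2k)\rfloor$ and $\rho=\lceil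 18k\ln(6k)\rceil$. Assume an initial part of $[L]$ is partitioned into $\rho$ consecutive intervals (epochs), each containing at least $\Delta+t$ snapshots that are $k$-edge-deficient w.r.t. $T$; each epoch's first $\Delta$ time steps form its repositioning part, and the rest (containing at least $t$ such snapshots) is its roundabout part. In epoch $i$, run the roundabout process for $t$ steps on the first $t$ $k$-edge-deficient snapshots of its roundabout part, let $A^{(i)}$ be the active agents after step $t$ and $S^{(i)}$ their initial states. Let $\bigcup_{i\in[\rho]}S^{(i)}=\{m_1<\dots<m_d\}$, $I_j=[\![m_j,m_{j+1}[\![$ for $j\in[d-1]$, $I_d=[\![m_d,m_1[\![$, and $\mathcal{I}=\{I_1,\dots,I_d\}$. For $I\in\mathcal{I}$, a tuple $(s_1,\dots,s_\rho)\in S^{(1)}\times\cdots\times S^{(\rho)}$ is $I$-missing if for every $i\in[\rho]$ the agent of $A^{(i)}$ with initial state $s_i$ does not visit all states of $I$ in the roundabout process of epoch $i$; it is $I$-covering if it is not $I$-missing. *)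

theory Defs
  imports Complex_Main "HOL-Library.FuncSet"
begin

definition simple_graph :: "'a set \<Rightarrow> 'a set set \<Rightarrow> bool" where
  "simple_graph V E \<longleftrightarrow> E \<subseteq> {e. e \<subseteq> V \<and> card e = 2}"

definition connected_on :: "'a set \<Rightarrow> 'a set set \<Rightarrow> bool" where
  "connected_on V E \<longleftrightarrow> (\<forall>x\<in>V. \<forall>y\<in>V. (x, y) \<in> {(a, b). {a, b} \<in> E}\<^sup>*)"

definition spanning_tree :: "'a set \<Rightarrow> 'a set set \<Rightarrow> 'a set set \<Rightarrow> bool" where
  "spanning_tree V U T \<longleftrightarrow> T \<subseteq> U \<and> connected_on V T \<and>
     (\<forall>f\<in>T. \<not> connected_on V (T - {f}))"

definition dfs_tour :: "'a set set \<Rightarrow> 'a \<Rightarrow> nat \<Rightarrow> (nat \<Rightarrow> 'a) \<Rightarrow> bool" where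
  "dfs_tour T r N v \<longleftrightarrow> v 1 = r \<and> v (N + 1) = r \<and>
     (\<forall>q\<in>{1..N}. {v q, v (Suc q)} \<in> T) \<and>
     (\<forall>f\<in>T. card {q\<in>{1..N}. {v q, v (Suc q)} = f} = 2)"

definition edge_deficient :: "nat \<Rightarrow> 'a set set \<Rightarrow> 'a set set \<Rightarrow> bool" where
  "edge_deficient k T E \<longleftrightarrow> card (T - E) \<le> k"

definition cint :: "nat \<Rightarrow> nat \<Rightarrow> nat \<Rightarrow> nat set" where
  "cint N i j = (if i \<le> j then {i..j} else {i..N} \<union> {1..j})"

definition cinto :: "nat \<Rightarrow> nat \<Rightarrow> nat \<Rightarrow> nat set" where
  "cinto N i j = cint N i j - {j}"

text \<open>State of agent a_i after tau steps; e q is the q-th tour edge, H tau the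
  tau-th graph of the sequence.\<close>
fun rstate :: "nat \<Rightarrow> (nat \<Rightarrow> 'a set) \<Rightarrow> (nat \<Rightarrow> 'a set set) \<Rightarrow> nat \<Rightarrow> nat \<Rightarrow> nat" where
  "rstate N e H i 0 = i"
| "rstate N e H i (Suc \<tau>) =
     (let q = rstate N e H i \<tau> in if e q \<in> H (Suc \<tau>) then q mod N + 1 else q)"

definition visited :: "nat \<Rightarrow> (nat \<Rightarrow> 'a set) \<Rightarrow> (nat \<Rightarrow> 'a set set) \<Rightarrow> nat \<Rightarrow> nat \<Rightarrow> nat set" where
  "visited N e H i \<tau> = cint N i (rstate N e H i \<tau>)"

definition remove_step :: "(nat \<Rightarrow> nat set) \<Rightarrow> (nat set \<times> nat set) set" where
  "remove_step D = {(A, A - {i}) | A i. i \<in> A \<and> D i \<subseteq> (\<Union>j\<in>A - {i}. D j)}"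

definition prune_outcome :: "(nat \<Rightarrow> nat set) \<Rightarrow> nat set \<Rightarrow> nat set \<Rightarrow> bool" where
  "prune_outcome D A A' \<longleftrightarrow> (A, A') \<in> (remove_step D)\<^sup>* \<and>
     \<not> (\<exists>i\<in>A'. D i \<subseteq> (\<Union>j\<in>A' - {i}. D j))"

text \<open>Agents are identified with their initial states 1..N. Act tau is a valid
  sequence of active sets A(tau) for tau = 0..t.\<close>
definition roundabout_active ::
  "nat \<Rightarrow> (nat \<Rightarrow> 'a set) \<Rightarrow> (nat \<Rightarrow> 'a set set) \<Rightarrow> nat \<Rightarrow> (nat \<Rightarrow> nat set) \<Rightarrow> bool" where
  "roundabout_active N e H t Act \<longleftrightarrow> Act 0 = {1..N} \<and>
     (\<forall>\<tau>\<in>{1..t}. prune_outcome (\<lambda>i. visited N e H i \<tau>) (Act (\<tau> - 1)) (Act \<tau>))"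

text \<open>For M = {m_1 < ... < m_d}: I_j = [[m_j, m_(j+1)[[ and I_d = [[m_d, m_1[[.\<close>
definition interval_family :: "nat \<Rightarrow> nat set \<Rightarrow> nat set set" where
  "interval_family N M =
     (let ms = sorted_list_of_set M; d = length ms in
       {cinto N (ms ! j) (ms ! ((j + 1) mod d)) | j. j < d})"

end

theory Submission
  imports Defs
begin

definition dl :: "nat \<Rightarrow> nat \<Rightarrow> nat \<Rightarrow> nat" where
  "dl N u z = (if u \<le> z then z - u else z + N - u)"

definition arcset :: "nat \<Rightarrow> nat \<Rightarrow> nat \<Rightarrow> nat set" where
  "arcset N s m = {w\<in>{1..N}. dl N s w \<le> m}"

lemma cint_arc: "i \<in> {1..N} \<Longrightarrow> j \<in> {1..N} \<Longrightarrow> cint N i j = arcset N i (dl N i j)"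
  by (auto simp: cint_def arcset_def dl_def)

lemma dl_lt: "u \<in> {1..N} \<Longrightarrow> z \<in> {1..N} \<Longrightarrow> dl N u z < N"
  by (auto simp: dl_def)

lemma dl_tri: "u \<in> {1..N} \<Longrightarrow> z \<in> {1..N} \<Longrightarrow> w \<in> {1..N} \<Longrightarrow>
   dl N u z + dl N z w = dl N u w \<or> dl N u z + dl N z w = dl N u w + N"
  unfolding dl_def by (cases "u \<le> z"; cases "z \<le> w"; cases "u \<le> w"; simp; arith)

lemma dl_self[simp]: "dl N u u = 0" by (simp add: dl_def)

lemma dl_zero: "u \<in> {1..N} \<Longrightarrow> z \<in> {1..N} \<Longrightarrow> dl N u z = 0 \<Longrightarrow> u = z"
  by (auto simp: dl_def split: if_splits)

lemma arc_sub:
  assumes "z \<in> arcset N s m" "z \<in> arcset N s1 m1" "z \<in> arcset N s2 m2"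
    "s \<in> {1..N}" "s1 \<in> {1..N}" "s2 \<in> {1..N}" "m < N" "m1 < N" "m2 < N"
    "dl N s z \<le> dl N s1 z" "m - dl N s z \<le> m2 - dl N s2 z"
  shows "arcset N s m \<subseteq> arcset N s1 m1 \<union> arcset N s2 m2"
proof
  fix w assume w: "w \<in> arcset N s m"
  have z: "z \<in> {1..N}" "dl N s z \<le> m" "dl N s1 z \<le> m1" "dl N s2 z \<le> m2"
    using assms(1-3) by (auto simp: arcset_def)
  have w1: "w \<in> {1..N}" "dl N s w \<le> m" using w by (auto simp: arcset_def)
  note t1 = dl_tri[OF assms(4) z(1) w1(1)] and t2 = dl_tri[OF assms(4) w1(1) z(1)]
    and t3 = dl_tri[OF assms(5) w1(1) z(1)] and t4 = dl_tri[OF assms(6) z(1) w1(1)]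
  note l = dl_lt[OF z(1) w1(1)] dl_lt[OF w1(1) z(1)] dl_lt[OF assms(5) w1(1)]
    dl_lt[OF assms(6) w1(1)] dl_lt[OF assms(4) w1(1)] dl_lt[OF assms(4) z(1)]
  show "w \<in> arcset N s1 m1 \<union> arcset N s2 m2"
  proof (cases "dl N s z \<le> dl N s w")
    case True
    hence "dl N s2 w \<le> m2" using t1 t4 l z w1 assms(7-11) by linarith
    thus ?thesis using w1 by (simp add: arcset_def)
  next
    case False
    hence "dl N s1 w \<le> m1" using t2 t3 l z w1 assms(7-11) by linarith
    thus ?thesis using w1 by (simp add: arcset_def)
  qed
qed

lemma card_arcset:
  assumes "s \<in> {1..N}" "m < N"
  shows "card (arcset N s m) = Suc m"
proof -
  define f where "f j = (if s + j \<le> N then s + j else s + j - N)" for j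
  have "arcset N s m = f ` {0..m}"
  proof
    show "arcset N s m \<subseteq> f ` {0..m}"
    proof
      fix w assume w: "w \<in> arcset N s m"
      hence "w = f (dl N s w)" "dl N s w \<in> {0..m}" using assms
        by (auto simp: arcset_def dl_def f_def)
      thus "w \<in> f ` {0..m}" by blast
    qed
    show "f ` {0..m} \<subseteq> arcset N s m"
      using assms by (auto simp: arcset_def dl_def f_def)
  qed
  moreover have "inj_on f {0..m}"
    using assms by (auto simp: inj_on_def f_def split: if_splits)
  ultimately show ?thesis by (simp add: card_image)
qed

lemma rstate_range: "s \<in> {1..N} \<Longrightarrow> rstate N e H s \<tau> \<in> {1..N}"
proof (induction \<tau>)
  case 0 thus ?case by simp
next
  case (Suc \<tau>)
  have "N > 0" using Suc.prems by auto
  hence "rstate N e H s \<tau> mod N + 1 \<in> {1..N}"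
    by (simp add: Suc_leI)
  thus ?case using Suc by (simp add: Let_def)
qed

lemma rstate_dl:
  assumes "s \<in> {1..N}" "\<tau> < N"
  shows "dl N s (rstate N e H s \<tau>) + card {x\<in>{1..\<tau>}. e (rstate N e H s (x - 1)) \<notin> H x} = \<tau>"
  using assms(2)
proof (induction \<tau>)
  case 0 thus ?case by (simp add: dl_def)
next
  case (Suc \<tau>)
  let ?q = "rstate N e H s \<tau>"
  let ?P = "\<lambda>x. e (rstate N e H s (x - 1)) \<notin> H x"
  have IH: "dl N s ?q + card {x\<in>{1..\<tau>}. ?P x} = \<tau>" using Suc by simp
  have q: "?q \<in> {1..N}" using rstate_range assms(1) by blast
  have split: "{x\<in>{1..Suc \<tau>}. ?P x} = {x\<in>{1..\<tau>}. ?P x} \<union> (if ?P (Suc \<tau>) then {Suc \<tau>} else {})"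
    by (auto simp: le_Suc_eq)
  show ?case
  proof (cases "?P (Suc \<tau>)")
    case True
    hence "rstate N e H s (Suc \<tau>) = ?q" by (simp add: Let_def)
    moreover have "card {x\<in>{1..Suc \<tau>}. ?P x} = Suc (card {x\<in>{1..\<tau>}. ?P x})"
      using True split by simp
    ultimately show ?thesis using IH by simp
  next
    case False
    hence r: "rstate N e H s (Suc \<tau>) = ?q mod N + 1" by (simp add: Let_def)
    have m: "?q mod N + 1 = (if ?q = N then 1 else ?q + 1)" using q by auto
    have "dl N s ?q \<le> \<tau>" using IH by linarith
    hence "dl N s (?q mod N + 1) = dl N s ?q + 1"
      using m q assms(1) Suc.prems by (auto simp: dl_def)
    moreover have "card {x\<in>{1..Suc \<tau>}. ?P x} = card {x\<in>{1..\<tau>}. ?P x}"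
      using False split by simp
    ultimately show ?thesis using IH r by simp
  qed
qed

lemma visited_arc:
  assumes "s \<in> {1..N}"
  shows "visited N e H s \<tau> = arcset N s (dl N s (rstate N e H s \<tau>))"
  unfolding visited_def using cint_arc[OF assms rstate_range[OF assms]] .

lemma prune_props:
  assumes "prune_outcome D A A'"
  shows "A' \<subseteq> A" "(\<Union>i\<in>A'. D i) = (\<Union>i\<in>A. D i)"
    "\<forall>i\<in>A'. \<not> D i \<subseteq> (\<Union>j\<in>A' - {i}. D j)"
proof -
  have "(A, A') \<in> (remove_step D)\<^sup>*" using assms by (simp add: prune_outcome_def)
  hence "A' \<subseteq> A \<and> (\<Union>i\<in>A'. D i) = (\<Union>i\<in>A. D i)"
  proof (induction rule: rtrancl_induct)
    case base thus ?case by simp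
  next
    case (step B C)
    then obtain i where "B = C \<union> {i} \<or> True" "C = B - {i}" "i \<in> B"
      "D i \<subseteq> (\<Union>j\<in>B - {i}. D j)" by (auto simp: remove_step_def)
    hence "(\<Union>j\<in>C. D j) = (\<Union>j\<in>B. D j)" by blast
    thus ?case using step \<open>C = B - {i}\<close> by auto
  qed
  thus "A' \<subseteq> A" "(\<Union>i\<in>A'. D i) = (\<Union>i\<in>A. D i)" by auto
  show "\<forall>i\<in>A'. \<not> D i \<subseteq> (\<Union>j\<in>A' - {i}. D j)" using assms by (simp add: prune_outcome_def)
qed


lemma arcset_sub: "arcset N s m \<subseteq> {1..N}" by (auto simp: arcset_def)

lemma arcset_mono: "m \<le> m' \<Longrightarrow> arcset N s m \<subseteq> arcset N s m'" by (auto simp: arcset_def)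

lemma mv_mono:
  assumes "s \<in> {1..N}" "Suc \<tau> < N"
  shows "dl N s (rstate N e H s \<tau>) \<le> dl N s (rstate N e H s (Suc \<tau>))"
proof -
  let ?P = "\<lambda>x. e (rstate N e H s (x - 1)) \<notin> H x"
  have a: "dl N s (rstate N e H s \<tau>) + card {x\<in>{1..\<tau>}. ?P x} = \<tau>"
    using rstate_dl[OF assms(1), of \<tau> e H] assms(2) by simp
  have b: "dl N s (rstate N e H s (Suc \<tau>)) + card {x\<in>{1..Suc \<tau>}. ?P x} = Suc \<tau>"
    using rstate_dl[OF assms(1), of "Suc \<tau>" e H] assms(2) by simp
  have "{x\<in>{1..Suc \<tau>}. ?P x} \<subseteq> insert (Suc \<tau>) {x\<in>{1..\<tau>}. ?P x}" by (auto simp: le_Suc_eq)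
  hence "card {x\<in>{1..Suc \<tau>}. ?P x} \<le> card (insert (Suc \<tau>) {x\<in>{1..\<tau>}. ?P x})"
    by (intro card_mono) auto
  also have "\<dots> \<le> Suc (card {x\<in>{1..\<tau>}. ?P x})" by (simp add: card_insert_if)
  finally have "card {x\<in>{1..Suc \<tau>}. ?P x} \<le> Suc (card {x\<in>{1..\<tau>}. ?P x})" .
  thus ?thesis using a b by linarith
qed

lemma visited_mono:
  assumes "s \<in> {1..N}" "Suc \<tau> < N"
  shows "visited N e H s \<tau> \<subseteq> visited N e H s (Suc \<tau>)"
  using visited_arc[OF assms(1)] arcset_mono mv_mono[OF assms] by metis

lemma visited_sub: "s \<in> {1..N} \<Longrightarrow> visited N e H s \<tau> \<subseteq> {1..N}"
  using visited_arc arcset_sub by metis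

lemma sum_card_swap:
  assumes "finite A" "finite X"
  shows "(\<Sum>s\<in>A. card {x\<in>X. P s x}) = (\<Sum>x\<in>X. card {s\<in>A. P s x})"
proof -
  have "(\<Sum>s\<in>A. card {x\<in>X. P s x}) = (\<Sum>s\<in>A. \<Sum>x\<in>X. if P s x then 1 else 0)"
    using assms by (simp add: sum.inter_filter[symmetric])
  also have "\<dots> = (\<Sum>x\<in>X. \<Sum>s\<in>A. if P s x then 1 else 0)" by (rule sum.swap)
  also have "\<dots> = (\<Sum>x\<in>X. card {s\<in>A. P s x})"
    using assms by (simp add: sum.inter_filter[symmetric])
  finally show ?thesis .
qed

lemma three_elems:
  assumes "2 < card X"
  shows "\<exists>a b c. a \<in> X \<and> b \<in> X \<and> c \<in> X \<and> a \<noteq> b \<and> a \<noteq> c \<and> b \<noteq> c"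
proof -
  have fin: "finite X" using assms card.infinite by fastforce
  have "X \<noteq> {}" using assms by (metis card.empty not_less_zero)
  then obtain a where a: "a \<in> X" by blast
  have "1 < card (X - {a})" using assms a fin by simp
  hence "X - {a} \<noteq> {}" by (metis card.empty not_less_zero)
  then obtain b where b: "b \<in> X - {a}" by blast
  have "0 < card (X - {a} - {b})" using assms a b fin by simp
  hence "X - {a} - {b} \<noteq> {}" by (metis card.empty less_irrefl)
  then obtain c where c: "c \<in> X - {a} - {b}" by blast
  show ?thesis using a b c by blast
qed


lemma epoch:
  fixes N k t :: nat and e :: "nat \<Rightarrow> 'a set" and H :: "nat \<Rightarrow> 'a set set" and A :: "nat \<Rightarrow> nat set"
  assumes N2: "N \<ge> 2" and k1: "k \<ge> 1" and tdef: "t = N div (2*k)"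
    and act: "roundabout_active N e H t A"
    and blk: "\<forall>x\<in>{1..t}. card {q\<in>{1..N}. e q \<notin> H x} \<le> 2*k"
  shows "A t \<subseteq> {1..N}" "(\<Union>s\<in>A t. visited N e H s t) = {1..N}" "card (A t) < 6*k"
proof -
  have "t \<le> N div 2" using tdef k1 by (simp add: div_le_mono2)
  hence tN: "t < N" using N2 by linarith
  have A0: "A 0 = {1..N}" using act by (simp add: roundabout_active_def)
  have step: "\<And>\<tau>. \<tau> \<in> {1..t} \<Longrightarrow> prune_outcome (\<lambda>i. visited N e H i \<tau>) (A (\<tau> - 1)) (A \<tau>)"
    using act by (simp add: roundabout_active_def)
  have vis0: "\<And>s. visited N e H s 0 = {s}" by (simp add: visited_def cint_def)
  have inv: "\<tau> \<le> t \<Longrightarrow> A \<tau> \<subseteq> {1..N} \<and> (\<Union>s\<in>A \<tau>. visited N e H s \<tau>) = {1..N}" for \<tau>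
  proof (induction \<tau>)
    case 0 thus ?case using A0 vis0 by auto
  next
    case (Suc \<tau>)
    have IH: "A \<tau> \<subseteq> {1..N}" "(\<Union>s\<in>A \<tau>. visited N e H s \<tau>) = {1..N}" using Suc by auto
    have p: "prune_outcome (\<lambda>i. visited N e H i (Suc \<tau>)) (A \<tau>) (A (Suc \<tau>))"
      using step[of "Suc \<tau>"] Suc.prems by simp
    note pp = prune_props[OF p]
    have "(\<Union>s\<in>A \<tau>. visited N e H s (Suc \<tau>)) = {1..N}"
    proof
      show "(\<Union>s\<in>A \<tau>. visited N e H s (Suc \<tau>)) \<subseteq> {1..N}"
        using IH(1) visited_sub by blast
      show "{1..N} \<subseteq> (\<Union>s\<in>A \<tau>. visited N e H s (Suc \<tau>))"
      proof
        fix z assume "z \<in> {1..N}"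
        then obtain s where s: "s \<in> A \<tau>" "z \<in> visited N e H s \<tau>" using IH(2) by blast
        have "s \<in> {1..N}" using s IH(1) by blast
        hence "z \<in> visited N e H s (Suc \<tau>)" using visited_mono[of s N \<tau> e H] s Suc.prems tN by auto
        thus "z \<in> (\<Union>s\<in>A \<tau>. visited N e H s (Suc \<tau>))" using s by blast
      qed
    qed
    thus ?case using pp IH by auto
  qed
  have irr: "\<And>\<tau>. \<tau> \<in> {1..t} \<Longrightarrow> \<forall>i\<in>A \<tau>. \<not> visited N e H i \<tau> \<subseteq> (\<Union>j\<in>A \<tau> - {i}. visited N e H j \<tau>)"
    using prune_props(3)[OF step] by blast
  have decr: "\<And>\<tau>. \<tau> \<in> {1..t} \<Longrightarrow> A \<tau> \<subseteq> A (\<tau> - 1)"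
    using prune_props(1)[OF step] by blast
  have mono: "j \<le> t \<Longrightarrow> A t \<subseteq> A (t - j)" for j
  proof (induction j)
    case 0 thus ?case by simp
  next
    case (Suc j)
    have "A (t - j) \<subseteq> A (t - j - 1)" using decr[of "t - j"] Suc.prems by simp
    moreover have "A t \<subseteq> A (t - j)" using Suc.IH Suc.prems by simp
    ultimately have "A t \<subseteq> A (t - j - 1)" by (rule subset_trans[rotated])
    thus ?case by (metis Suc_eq_plus1 diff_diff_left)
  qed
  have mono': "\<tau> \<le> t \<Longrightarrow> A t \<subseteq> A \<tau>" for \<tau> using mono[of "t - \<tau>"] by simp
  have At: "A t \<subseteq> {1..N}" using inv by simp
  show "A t \<subseteq> {1..N}" by (rule At)
  show "(\<Union>s\<in>A t. visited N e H s t) = {1..N}" using inv by simp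
  define m where "m s \<tau> = dl N s (rstate N e H s \<tau>)" for s \<tau>
  have visA: "s \<in> {1..N} \<Longrightarrow> visited N e H s \<tau> = arcset N s (m s \<tau>)" for s \<tau>
    unfolding m_def by (rule visited_arc)
  have mlt: "s \<in> {1..N} \<Longrightarrow> m s \<tau> < N" for s \<tau>
    unfolding m_def using dl_lt rstate_range by blast
  have pin: "s \<in> {1..N} \<Longrightarrow> rstate N e H s \<tau> \<in> arcset N s (m s \<tau>)" for s \<tau>
    unfolding m_def arcset_def using rstate_range by blast
  have inj: "\<tau> \<le> t \<Longrightarrow> inj_on (\<lambda>s. rstate N e H s \<tau>) (A \<tau>)" for \<tau>
  proof (cases "\<tau> = 0")
    case True thus ?thesis by (simp add: inj_on_def)
  next
    case False
    assume "\<tau> \<le> t"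
    hence tt: "\<tau> \<in> {1..t}" using False by simp
    have Ar: "A \<tau> \<subseteq> {1..N}" using inv \<open>\<tau> \<le> t\<close> by simp
    show ?thesis
    proof (rule inj_onI, rule ccontr)
      fix x y assume x: "x \<in> A \<tau>" and y: "y \<in> A \<tau>" and eq: "rstate N e H x \<tau> = rstate N e H y \<tau>" and ne: "x \<noteq> y"
      let ?p = "rstate N e H x \<tau>"
      have xr: "x \<in> {1..N}" and yr: "y \<in> {1..N}" using x y Ar by auto
      have sub: "visited N e H a \<tau> \<subseteq> visited N e H b \<tau>" if
        ab: "(a = x \<and> b = y) \<or> (a = y \<and> b = x)" and le: "m a \<tau> \<le> m b \<tau>" for a b
      proof -
        have ar: "a \<in> {1..N}" "b \<in> {1..N}" using ab xr yr by auto
        have pa: "?p = rstate N e H a \<tau>" "?p = rstate N e H b \<tau>" using ab eq by auto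
        have "arcset N a (m a \<tau>) \<subseteq> arcset N b (m b \<tau>) \<union> arcset N b (m b \<tau>)"
          apply (rule arc_sub[where z = ?p])
          using pin[OF ar(1), of \<tau>] pin[OF ar(2), of \<tau>] pa ar mlt[OF ar(1), of \<tau>] mlt[OF ar(2), of \<tau>] le by (auto simp: m_def)
        thus ?thesis using visA ar by simp
      qed
      show False
      proof (cases "m x \<tau> \<le> m y \<tau>")
        case True
        hence "visited N e H x \<tau> \<subseteq> visited N e H y \<tau>" using sub by blast
        thus False using irr[OF tt] x y ne by blast
      next
        case False
        hence "visited N e H y \<tau> \<subseteq> visited N e H x \<tau>" using sub by simp
        thus False using irr[OF tt] x y ne by blast
      qed
    qed
  qed
  show "card (A t) < 6*k"
  proof (cases "t = 0")
    case True
    then have "A t = {1..N}" using A0 by simp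
    moreover have "N < 2*k" using True tdef k1 by (simp add: div_eq_0_iff)
    ultimately show ?thesis by simp
  next
    case False
    hence tt: "t \<in> {1..t}" by simp
    define c where "c s = card {x\<in>{1..t}. e (rstate N e H s (x - 1)) \<notin> H x}" for s
    have mc: "s \<in> {1..N} \<Longrightarrow> m s t + c s = t" for s
      unfolding m_def c_def using rstate_dl tN by blast
    have finA: "finite (A t)" using At finite_subset by blast
    have bl: "card {s\<in>A t. e (rstate N e H s (x - 1)) \<notin> H x} \<le> 2*k" if x: "x \<in> {1..t}" for x
    proof -
      have "card {s\<in>A t. e (rstate N e H s (x - 1)) \<notin> H x} \<le> card {q\<in>{1..N}. e q \<notin> H x}"
      proof (rule card_inj_on_le[where f = "\<lambda>s. rstate N e H s (x - 1)"])
        have x1: "x - 1 \<le> t" using x by auto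
        hence "A t \<subseteq> A (x - 1)" using mono'[of "x - 1"] by blast
        hence "{s\<in>A t. e (rstate N e H s (x - 1)) \<notin> H x} \<subseteq> A (x - 1)" by blast
        thus "inj_on (\<lambda>s. rstate N e H s (x - 1)) {s\<in>A t. e (rstate N e H s (x - 1)) \<notin> H x}"
          using inj[OF x1] by (rule inj_on_subset[rotated])
        show "(\<lambda>s. rstate N e H s (x - 1)) ` {s\<in>A t. e (rstate N e H s (x - 1)) \<notin> H x} \<subseteq> {q\<in>{1..N}. e q \<notin> H x}"
          using At rstate_range by blast
      qed simp
      thus ?thesis using blk x by (meson le_trans)
    qed
    have sumc: "(\<Sum>s\<in>A t. c s) \<le> t * (2*k)"
    proof -
      have "(\<Sum>s\<in>A t. c s) = (\<Sum>x\<in>{1..t}. card {s\<in>A t. e (rstate N e H s (x - 1)) \<notin> H x})"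
        unfolding c_def by (rule sum_card_swap[OF finA]) simp
      also have "\<dots> \<le> of_nat (card {1..t}) * (2*k)" by (rule sum_bounded_above) (rule bl)
      finally show ?thesis by simp
    qed
    have cover: "card {s\<in>A t. z \<in> visited N e H s t} \<le> 2" if z: "z \<in> {1..N}" for z
    proof (rule ccontr)
      assume "\<not> ?thesis"
      hence c3: "2 < card {s\<in>A t. z \<in> visited N e H s t}" by simp
      obtain a b c where abc: "a \<in> {s\<in>A t. z \<in> visited N e H s t}" "b \<in> {s\<in>A t. z \<in> visited N e H s t}"
        "c \<in> {s\<in>A t. z \<in> visited N e H s t}" "a \<noteq> b" "a \<noteq> c" "b \<noteq> c"
        using three_elems[OF c3] by blast
      have contra: "False" if xyw: "x \<in> {a,b,c}" "y \<in> {a,b,c}" "w \<in> {a,b,c}" "x \<noteq> y" "x \<noteq> w"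
        "dl N x z \<le> dl N y z" "m x t - dl N x z \<le> m w t - dl N w z" for x y w
      proof -
        have inA: "x \<in> A t" "y \<in> A t" "w \<in> A t" using xyw abc by auto
        have r: "x \<in> {1..N}" "y \<in> {1..N}" "w \<in> {1..N}" using inA At by auto
        have "z \<in> visited N e H x t" "z \<in> visited N e H y t" "z \<in> visited N e H w t"
          using xyw abc by auto
        hence zin: "z \<in> arcset N x (m x t)" "z \<in> arcset N y (m y t)" "z \<in> arcset N w (m w t)"
          using visA[OF r(1)] visA[OF r(2)] visA[OF r(3)] by auto
        have "arcset N x (m x t) \<subseteq> arcset N y (m y t) \<union> arcset N w (m w t)"
          by (rule arc_sub[OF zin r mlt[OF r(1)] mlt[OF r(2)] mlt[OF r(3)] xyw(6,7)])
        hence "visited N e H x t \<subseteq> visited N e H y t \<union> visited N e H w t"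
          using visA[OF r(1)] visA[OF r(2)] visA[OF r(3)] by simp
        moreover have "visited N e H y t \<union> visited N e H w t \<subseteq> (\<Union>j\<in>A t - {x}. visited N e H j t)"
          using inA xyw(4,5) by blast
        ultimately have "visited N e H x t \<subseteq> (\<Union>j\<in>A t - {x}. visited N e H j t)" by blast
        thus False using irr[OF tt] inA by blast
      qed
      have c1: "\<not> (dl N a z \<le> dl N b z \<and> m a t - dl N a z \<le> m c t - dl N c z)" using contra[of a b c] abc by auto
      have c2: "\<not> (dl N a z \<le> dl N c z \<and> m a t - dl N a z \<le> m b t - dl N b z)" using contra[of a c b] abc by auto
      have c3: "\<not> (dl N b z \<le> dl N a z \<and> m b t - dl N b z \<le> m c t - dl N c z)" using contra[of b a c] abc by auto
      have c4: "\<not> (dl N b z \<le> dl N c z \<and> m b t - dl N b z \<le> m a t - dl N a z)" using contra[of b c a] abc by auto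
      have c5: "\<not> (dl N c z \<le> dl N a z \<and> m c t - dl N c z \<le> m b t - dl N b z)" using contra[of c a b] abc by auto
      have c6: "\<not> (dl N c z \<le> dl N b z \<and> m c t - dl N c z \<le> m a t - dl N a z)" using contra[of c b a] abc by auto
      show False using c1 c2 c3 c4 c5 c6 by arith
    qed
    have sumD: "(\<Sum>s\<in>A t. Suc (m s t)) \<le> N * 2"
    proof -
      have "(\<Sum>s\<in>A t. Suc (m s t)) = (\<Sum>s\<in>A t. card {z\<in>{1..N}. z \<in> visited N e H s t})"
      proof (rule sum.cong[OF refl])
        fix s assume "s \<in> A t"
        hence r: "s \<in> {1..N}" using At by auto
        have "{z\<in>{1..N}. z \<in> visited N e H s t} = arcset N s (m s t)"
          using visA[OF r] arcset_sub by blast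
        thus "Suc (m s t) = card {z\<in>{1..N}. z \<in> visited N e H s t}"
          using card_arcset[OF r mlt[OF r]] by simp
      qed
      also have "\<dots> = (\<Sum>z\<in>{1..N}. card {s\<in>A t. z \<in> visited N e H s t})"
        by (rule sum_card_swap[OF finA]) simp
      also have "\<dots> \<le> of_nat (card {1..N}) * 2" by (rule sum_bounded_above) (rule cover)
      finally show ?thesis by simp
    qed
    have "(\<Sum>s\<in>A t. Suc (m s t) + c s) = (\<Sum>s\<in>A t. t + 1)"
    proof (rule sum.cong[OF refl])
      fix s assume "s \<in> A t"
      hence "s \<in> {1..N}" using At by blast
      thus "Suc (m s t) + c s = t + 1" using mc by simp
    qed
    hence "card (A t) * (t + 1) = (\<Sum>s\<in>A t. Suc (m s t) + c s)" by simp
    also have "\<dots> = (\<Sum>s\<in>A t. Suc (m s t)) + (\<Sum>s\<in>A t. c s)" by (rule sum.distrib)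
    finally have main: "card (A t) * (t + 1) \<le> N * 2 + t * (2*k)" using sumc sumD by linarith
    have "N mod (2*k) < 2*k" using k1 by simp
    moreover have "N = 2*k * t + N mod (2*k)" using tdef by simp
    ultimately have "N < 2*k*(t+1)" by (simp add: algebra_simps)
    hence "card (A t) * (t + 1) < 6*k * (t + 1)" using main by (simp add: algebra_simps)
    thus ?thesis by (simp only: mult_less_cancel2)
  qed
qed


lemma dl_anti: "u \<in> {1..N} \<Longrightarrow> z \<in> {1..N} \<Longrightarrow> u \<noteq> z \<Longrightarrow> dl N u z + dl N z u = N"
  by (auto simp: dl_def)

lemma dl_inj: "u \<in> {1..N} \<Longrightarrow> z \<in> {1..N} \<Longrightarrow> w \<in> {1..N} \<Longrightarrow> dl N u z = dl N u w \<Longrightarrow> z = w"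
  by (auto simp: dl_def split: if_splits)

lemma dl_pred:
  assumes "a \<in> {1..N}" "b \<in> {1..N}" "a \<noteq> b"
  shows "(if b = 1 then N else b - 1) \<in> {1..N}" "dl N a (if b = 1 then N else b - 1) + 1 = dl N a b"
  using assms by (auto simp: dl_def)

lemma key_arith:
  assumes r: "a \<in> {1..N}" "b \<in> {1..N}" "s \<in> {1..N}" "z \<in> {1..N}" and ab: "a \<noteq> b"
    and za: "dl N a z < dl N a b" and sa: "s = a \<or> dl N a b \<le> dl N a s"
  shows "dl N s z \<le> dl N s (if b = 1 then N else b - 1)"
proof -
  define y where "y = (if b = 1 then N else b - 1)"
  have y: "y \<in> {1..N}" "dl N a y + 1 = dl N a b" using dl_pred[OF r(1,2) ab] y_def by auto
  show ?thesis
  proof (cases "s = a")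
    case True thus ?thesis using y za y_def by simp
  next
    case False
    have "dl N s a + dl N a s = N" by (rule dl_anti[OF r(3) r(1) False])
    moreover note dl_tri[OF r(3) r(1) r(4)] dl_tri[OF r(3) r(1) y(1)]
      dl_lt[OF r(3) r(4)] dl_lt[OF r(3) y(1)]
    ultimately have "dl N s z \<le> dl N s y" using y za sa False by arith
    thus ?thesis using y_def by simp
  qed
qed

lemma consec:
  assumes fin: "finite M" and MN: "M \<subseteq> {1..N}"
    and ms: "ms = sorted_list_of_set M" and d: "d = length ms" and j: "j < d"
    and a: "a = ms ! j" and b: "b = ms ! ((j + 1) mod d)" and z: "z \<in> M" "z \<noteq> a" and ab: "a \<noteq> b"
  shows "dl N a b \<le> dl N a z"
proof -
  have setms: "set ms = M" using ms fin by simp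
  have strict: "sorted_wrt (<) ms" using ms by (simp add: strict_sorted_list_of_set)
  have lt: "i < i' \<Longrightarrow> i' < d \<Longrightarrow> ms ! i < ms ! i'" for i i'
    using strict d by (simp add: sorted_wrt_iff_nth_less)
  have le: "i \<le> i' \<Longrightarrow> i' < d \<Longrightarrow> ms ! i \<le> ms ! i'" for i i'
    using lt by (cases "i = i'") (auto intro: less_imp_le)
  obtain p where p: "p < d" "ms ! p = z" using z(1) setms d by (metis in_set_conv_nth)
  have inM: "\<And>i. i < d \<Longrightarrow> ms ! i \<in> {1..N}" using setms MN d nth_mem by blast
  have ar: "a \<in> {1..N}" using inM j a by simp
  have zr: "z \<in> {1..N}" using z MN by auto
  have pj: "p \<noteq> j" using p z a by auto
  show ?thesis
  proof (cases "j + 1 < d")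
    case True
    hence bb: "b = ms ! (j + 1)" using b by simp
    have br: "b \<in> {1..N}" using inM True bb by simp
    have "a < b" using lt[of j "j+1"] True a bb by simp
    show ?thesis
    proof (cases "j < p")
      case True
      hence "b \<le> z" using le[of "j+1" p] p bb by simp
      thus ?thesis using \<open>a < b\<close> by (simp add: dl_def)
    next
      case False
      hence "z < a" using lt[of p j] pj p j a by simp
      thus ?thesis using \<open>a < b\<close> br by (simp add: dl_def)
    qed
  next
    case False
    hence jd: "j + 1 = d" using j by simp
    hence bb: "b = ms ! 0" using b by simp
    have j0: "0 < j" using ab a bb by (cases j) auto
    have "b < a" using lt[of 0 j] j0 j a bb by simp
    have "z < a" using lt[of p j] pj p jd a by simp
    have "b \<le> z" using le[of 0 p] p bb by simp
    show ?thesis using \<open>b < a\<close> \<open>z < a\<close> \<open>b \<le> z\<close> by (simp add: dl_def)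
  qed
qed

lemma cover_I:
  assumes fin: "finite M" and MN: "M \<subseteq> {1..N}" and N1: "N \<ge> 1"
    and SM: "S \<subseteq> M" and Un: "(\<Union>s\<in>S. D s) = {1..N}"
    and Darc: "\<forall>s\<in>S. D s = arcset N s (mm s)"
    and I: "I \<in> interval_family N M"
  shows "\<exists>s\<in>S. I \<subseteq> D s"
proof -
  define ms where "ms = sorted_list_of_set M"
  define d where "d = length ms"
  obtain j where j: "j < d" and Ieq: "I = cinto N (ms ! j) (ms ! ((j + 1) mod d))"
    using I unfolding interval_family_def Let_def ms_def d_def by blast
  define a where "a = ms ! j"
  define b where "b = ms ! ((j + 1) mod d)"
  have setms: "set ms = M" using ms_def fin by simp
  have d0: "0 < d" using j by simp
  have aM: "a \<in> M" using j setms d_def a_def by auto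
  have bM: "b \<in> M" using d0 setms d_def b_def by auto
  have ar: "a \<in> {1..N}" and br: "b \<in> {1..N}" using aM bM MN by auto
  have Sne: "S \<noteq> {}" using Un N1 by auto
  show ?thesis
  proof (cases "a = b")
    case True
    hence "I = {}" using Ieq a_def b_def by (simp add: cinto_def cint_def)
    thus ?thesis using Sne by blast
  next
    case False
    define y where "y = (if b = 1 then N else b - 1)"
    have yr: "y \<in> {1..N}" using dl_pred[OF ar br False] y_def by simp
    then obtain s where s: "s \<in> S" "y \<in> D s" using Un by blast
    have sM: "s \<in> M" using s SM by auto
    have sr: "s \<in> {1..N}" using sM MN by auto
    have ys: "dl N s y \<le> mm s" using s Darc by (simp add: arcset_def)
    have sa: "s = a \<or> dl N a b \<le> dl N a s"
      using consec[OF fin MN ms_def d_def j a_def b_def sM _ False] by blast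
    have "I \<subseteq> D s"
    proof
      fix z assume zI: "z \<in> I"
      hence zc: "z \<in> cint N a b" "z \<noteq> b" using Ieq a_def b_def by (auto simp: cinto_def)
      hence zr: "z \<in> {1..N}" and zle: "dl N a z \<le> dl N a b"
        using cint_arc[OF ar br] by (auto simp: arcset_def)
      have "dl N a z \<noteq> dl N a b" using dl_inj[OF ar zr br] zc(2) by blast
      hence "dl N a z < dl N a b" using zle by simp
      hence "dl N s z \<le> dl N s y" using key_arith[OF ar br sr zr False _ sa] y_def by simp
      thus "z \<in> D s" using ys s Darc zr by (simp add: arcset_def)
    qed
    thus ?thesis using s by blast
  qed
qed


lemma ln6_le: "ln (6::real) \<le> 2"
proof -
  have "1 + 1 + 1\<^sup>2 / 2 \<le> exp (1::real)" using exp_lower_Taylor_quadratic[of 1] by simp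
  hence e: "5/2 \<le> exp (1::real)" by simp
  have "exp (2::real) = exp 1 * exp 1" by (simp add: exp_add[symmetric])
  also have "\<dots> \<ge> 5/2 * (5/2)" using e by (intro mult_mono) auto
  finally have "6 \<le> exp (2::real)" by simp
  hence "ln (6::real) \<le> ln (exp 2)" by (subst ln_le_cancel_iff) auto
  thus ?thesis by simp
qed

lemma analytic:
  fixes k \<rho> :: nat
  assumes k1: "k \<ge> 1" and rho: "\<rho> = nat \<lceil>18 * real k * ln (6 * real k)\<rceil>"
  shows "real \<rho> * (6 * real k - 1) * (1 - 1 / (6 * real k)) ^ \<rho> \<le> 11 / 12"
proof -
  define K where "K = real k"
  define c where "c = 6 * K"
  have K1: "K \<ge> 1" using k1 K_def by simp
  have c6: "c \<ge> 6" using K1 c_def by simp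
  have lnc: "ln c = ln 6 + ln K" using K1 c_def by (simp add: ln_mult)
  have lnK: "ln K \<le> K - 1" using K1 by (intro ln_le_minus_one) simp
  have lnc_le: "ln c \<le> K + 1" using lnc lnK ln6_le by linarith
  have lnc_pos: "ln c > 0" using c6 by simp
  define x where "x = 18 * K * ln c"
  have x0: "x \<ge> 0" using x_def K1 lnc_pos by simp
  have rho_eq: "\<rho> = nat \<lceil>x\<rceil>" using rho x_def K_def c_def by simp
  have rho_ge: "real \<rho> \<ge> x" using rho_eq x0 by (simp add: real_nat_ceiling_ge)
  have "real \<rho> = of_int \<lceil>x\<rceil>" using rho_eq x0 by simp
  hence rho_le: "real \<rho> \<le> x + 1" using of_int_ceiling_le_add_one[of x] by simp
  have q: "1 - 1 / c \<le> exp (- (1 / c))" using exp_ge_add_one_self[of "- (1/c)"] by simp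
  have q0: "0 \<le> 1 - 1 / c" using c6 by simp
  have "(1 - 1 / c) ^ \<rho> \<le> exp (- (1 / c)) ^ \<rho>" using q q0 by (intro power_mono) auto
  also have "\<dots> = exp (- (real \<rho> / c))" by (simp add: exp_of_nat_mult[symmetric])
  also have "\<dots> \<le> exp (- (x / c))" using rho_ge c6 by (simp add: divide_right_mono)
  also have "x / c = 3 * ln c" using x_def c_def K1 by simp
  also have "exp (- (3 * ln c)) = 1 / c ^ 3"
  proof -
    have "ln (c ^ 3) = 3 * ln c" using c6 by (simp add: ln_realpow)
    hence "exp (3 * ln c) = c ^ 3" using c6 by (metis exp_ln zero_less_power less_le_trans zero_less_numeral)
    thus ?thesis by (simp add: exp_minus inverse_eq_divide)
  qed
  finally have qb: "(1 - 1 / c) ^ \<rho> \<le> 1 / c ^ 3" .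
  have rb: "real \<rho> \<le> 18 * K * (K + 1) + 1"
    using rho_le x_def lnc_le K1 by (smt (verit) mult_left_mono mult_nonneg_nonneg)
  have c1: "c - 1 \<ge> 0" using c6 by simp
  have "real \<rho> * (c - 1) * (1 - 1 / c) ^ \<rho> \<le> (18 * K * (K + 1) + 1) * (c - 1) * (1 / c ^ 3)"
    using rb qb c1 by (intro mult_mono) auto
  also have "\<dots> \<le> 11 / 12"
  proof -
    have cp: "c ^ 3 > 0" using c6 by simp
    have "K^2 \<le> K^3" using K1 by (simp add: power_increasing)
    moreover have "(18 * K * (K + 1) + 1) * (6 * K - 1) = 108*K^3 + 90*K^2 - 12*K - 1"
      by (simp add: algebra_simps power2_eq_square power3_eq_cube)
    moreover have "(6 * K) ^ 3 = 216 * K^3" by (simp add: power_mult_distrib)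
    ultimately have "(18 * K * (K + 1) + 1) * (6 * K - 1) \<le> 11 / 12 * (6 * K) ^ 3"
      using K1 by linarith
    thus ?thesis using cp c_def by (simp add: field_simps)
  qed
  finally show ?thesis using c_def K_def by simp
qed


lemma blocked_count:
  assumes finT: "finite T" and tour: "dfs_tour T r N v" and e_def: "\<forall>q. e q = {v q, v (Suc q)}"
    and def: "card (T - E) \<le> k"
  shows "card {q\<in>{1..N}. e q \<notin> E} \<le> 2 * k"
proof -
  have "{q\<in>{1..N}. e q \<notin> E} = (\<Union>f\<in>T - E. {q\<in>{1..N}. {v q, v (Suc q)} = f})"
    using tour e_def by (auto simp: dfs_tour_def)
  hence "card {q\<in>{1..N}. e q \<notin> E} \<le> (\<Sum>f\<in>T - E. card {q\<in>{1..N}. {v q, v (Suc q)} = f})"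
    using card_UN_le[of "T - E"] finT by simp
  also have "\<dots> = (\<Sum>f\<in>T - E. 2)"
    using tour by (intro sum.cong) (auto simp: dfs_tour_def)
  also have "\<dots> = 2 * card (T - E)" by simp
  finally show ?thesis using def by linarith
qed

theorem lemma12:
  fixes V :: "'a set" and n k \<Delta> L N t \<rho> :: nat
    and G :: "nat \<Rightarrow> 'a set set" and T :: "'a set set" and r :: 'a
    and v :: "nat \<Rightarrow> 'a" and e :: "nat \<Rightarrow> 'a set"
    and b :: "nat \<Rightarrow> nat"
    and H :: "nat \<Rightarrow> nat \<Rightarrow> 'a set set"
    and Act :: "nat \<Rightarrow> nat \<Rightarrow> nat set"
    and S :: "nat \<Rightarrow> nat set"
  assumes finV: "finite V" and cardV: "card V = n" and n2: "n \<ge> 2" and k1: "k \<ge> 1"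
    and graphs: "\<forall>x\<in>{1..L}. simple_graph V (G x)"
    and tree: "spanning_tree V (\<Union>x\<in>{1..L}. G x) T"
    and N_def: "N = 2 * (n - 1)"
    and root: "r \<in> V"
    and tour: "dfs_tour T r N v"
    and e_def: "\<forall>q. e q = {v q, v (Suc q)}"
    and t_def: "t = N div (2 * k)"
    and rho_def: "\<rho> = nat \<lceil>18 * real k * ln (6 * real k)\<rceil>"
    and b0: "b 0 = 0"
    and b_mono: "\<forall>i<\<rho>. b i < b (Suc i)"
    and bL: "b \<rho> \<le> L"
    and epoch_def: "\<forall>i\<in>{1..\<rho>}.
        card {x\<in>{b (i - 1)<..b i}. edge_deficient k T (G x)} \<ge> \<Delta> + t"
    and round_def: "\<forall>i\<in>{1..\<rho>}.
        card {x\<in>{b (i - 1) + \<Delta><..b i}. edge_deficient k T (G x)} \<ge> t"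
    and H_def: "\<forall>i\<in>{1..\<rho>}. \<forall>\<tau>\<in>{1..t}. H i \<tau> =
        G (sorted_list_of_set {x\<in>{b (i - 1) + \<Delta><..b i}. edge_deficient k T (G x)} ! (\<tau> - 1))"
    and active: "\<forall>i\<in>{1..\<rho>}. roundabout_active N e (H i) t (Act i)"
    and S_def: "\<forall>i\<in>{1..\<rho>}. S i = Act i t"
  shows "real (card {tup \<in> PiE {1..\<rho>} S.
            \<forall>I\<in>interval_family N (\<Union>i\<in>{1..\<rho>}. S i).
              \<exists>i\<in>{1..\<rho>}. I \<subseteq> visited N e (H i) (tup i) t})
         \<ge> (1 / 12) * real (card (PiE {1..\<rho>} S))"
  proof -
  have N2: "N \<ge> 2" using n2 N_def by simp
  have finT: "finite T"
  proof -
    have "T \<subseteq> (\<Union>x\<in>{1..L}. G x)" using tree by (simp add: spanning_tree_def)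
    also have "\<dots> \<subseteq> Pow V" using graphs by (auto simp: simple_graph_def)
    finally show ?thesis using finV by (simp add: finite_subset)
  qed
  define D where "D i s = visited N e (H i) s t" for i s
  have ep: "S i \<subseteq> {1..N} \<and> (\<Union>s\<in>S i. D i s) = {1..N} \<and> card (S i) < 6 * k" if i: "i \<in> {1..\<rho>}" for i
  proof -
    define F where "F = {x\<in>{b (i - 1) + \<Delta><..b i}. edge_deficient k T (G x)}"
    have finF: "finite F" using F_def by simp
    have cF: "card F \<ge> t" using round_def i F_def by simp
    have blk: "\<forall>x\<in>{1..t}. card {q\<in>{1..N}. e q \<notin> H i x} \<le> 2*k"
    proof
      fix x assume x: "x \<in> {1..t}"
      have "x \<le> t" "1 \<le> x" using x by auto
      hence "x - 1 < card F" using cF by linarith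
      hence len: "x - 1 < length (sorted_list_of_set F)" using finF by simp
      hence "sorted_list_of_set F ! (x - 1) \<in> F"
        using finF by (metis nth_mem set_sorted_list_of_set)
      hence "edge_deficient k T (G (sorted_list_of_set F ! (x - 1)))" using F_def by simp
      hence "card (T - H i x) \<le> k" using H_def i x F_def by (simp add: edge_deficient_def)
      thus "card {q\<in>{1..N}. e q \<notin> H i x} \<le> 2*k" using blocked_count[OF finT tour e_def] by blast
    qed
    have act: "roundabout_active N e (H i) t (Act i)" using active i by simp
    note E = epoch[OF N2 k1 t_def act blk]
    show ?thesis using E S_def i D_def by simp
  qed
  define M where "M = (\<Union>i\<in>{1..\<rho>}. S i)"
  have SN: "S i \<subseteq> {1..N}" if "i \<in> {1..\<rho>}" for i using ep[OF that] by blast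
  have MN: "M \<subseteq> {1..N}" unfolding M_def by (rule UN_least) (rule SN)
  have finM: "finite M" using MN finite_subset by blast
  have finS: "finite (S i)" if "i \<in> {1..\<rho>}" for i using ep[OF that] finite_subset by blast
  define Fam where "Fam = interval_family N M"
  define P where "P = PiE {1..\<rho>} S"
  define Good where "Good = {tup \<in> P. \<forall>I\<in>Fam. \<exists>i\<in>{1..\<rho>}. I \<subseteq> D i (tup i)}"
  define Miss where "Miss I = PiE {1..\<rho>} (\<lambda>i. {s\<in>S i. \<not> I \<subseteq> D i s})" for I
  define q where "q = 1 - 1 / (6 * real k)"
  have finMiss: "finite (Miss I)" for I unfolding Miss_def
  proof (intro finite_PiE finite_atLeastAtMost)
    fix i assume "i \<in> {1..\<rho>}"
    thus "finite {s\<in>S i. \<not> I \<subseteq> D i s}" using finS[OF \<open>i \<in> {1..\<rho>}\<close>] by simp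
  qed
  have finP: "finite P" unfolding P_def by (intro finite_PiE finite_atLeastAtMost finS)
  have cardP: "card P = (\<Prod>i\<in>{1..\<rho>}. card (S i))" using P_def by (simp add: card_PiE)
  have cov: "\<exists>s\<in>S i. I \<subseteq> D i s" if I: "I \<in> Fam" and i: "i \<in> {1..\<rho>}" for I i
  proof (rule cover_I[OF finM MN _ _ _ _ I[unfolded Fam_def]])
    show "1 \<le> N" using N2 by simp
    show "S i \<subseteq> M" using i M_def by auto
    show "(\<Union>s\<in>S i. D i s) = {1..N}" using ep[OF i] by simp
    show "\<forall>s\<in>S i. D i s = arcset N s (dl N s (rstate N e (H i) s t))"
      using ep[OF i] visited_arc D_def by blast
  qed
  have missc: "card (Miss I) \<le> (\<Prod>i\<in>{1..\<rho>}. card (S i) - 1)" if I: "I \<in> Fam" for I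
  proof -
    have "card (Miss I) = (\<Prod>i\<in>{1..\<rho>}. card {s\<in>S i. \<not> I \<subseteq> D i s})"
      using Miss_def by (simp add: card_PiE)
    also have "\<dots> \<le> (\<Prod>i\<in>{1..\<rho>}. card (S i) - 1)"
    proof (rule prod_mono)
      fix i assume i: "i \<in> {1..\<rho>}"
      obtain s0 where s0: "s0 \<in> S i" "I \<subseteq> D i s0" using cov[OF I i] by blast
      have "{s\<in>S i. \<not> I \<subseteq> D i s} \<subseteq> S i - {s0}" using s0 by blast
      hence "card {s\<in>S i. \<not> I \<subseteq> D i s} \<le> card (S i - {s0})"
        using finS[OF i] by (intro card_mono) auto
      thus "0 \<le> card {s\<in>S i. \<not> I \<subseteq> D i s} \<and> card {s\<in>S i. \<not> I \<subseteq> D i s} \<le> card (S i) - 1"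
        using s0 finS[OF i] by simp
    qed
    finally show ?thesis .
  qed
  have bad_sub: "P - Good \<subseteq> (\<Union>I\<in>Fam. Miss I)"
  proof
    fix tup assume "tup \<in> P - Good"
    then obtain I where I: "I \<in> Fam" "\<forall>i\<in>{1..\<rho>}. \<not> I \<subseteq> D i (tup i)" and tP: "tup \<in> P"
      using Good_def by blast
    have "tup \<in> Miss I" using tP I unfolding Miss_def P_def by (auto simp: PiE_iff)
    thus "tup \<in> (\<Union>I\<in>Fam. Miss I)" using I by blast
  qed
  define ms where "ms = sorted_list_of_set M"
  have FamI: "Fam = (\<lambda>j. cinto N (ms ! j) (ms ! ((j + 1) mod length ms))) ` {..<length ms}"
    unfolding Fam_def interval_family_def Let_def ms_def by auto
  have finFam: "finite Fam" using FamI by simp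
  have "card Fam \<le> length ms" using FamI card_image_le by (metis card_lessThan finite_lessThan)
  also have "\<dots> = card M" using ms_def finM by simp
  also have "\<dots> \<le> (\<Sum>i\<in>{1..\<rho>}. card (S i))" using M_def card_UN_le[of "{1..\<rho>}" S] by simp
  also have "\<dots> \<le> of_nat (card {1..\<rho>}) * (6 * k - 1)"
    by (rule sum_bounded_above) (use ep in \<open>fastforce\<close>)
  finally have cFam: "card Fam \<le> \<rho> * (6 * k - 1)" by simp
  have "card (P - Good) \<le> card (\<Union>I\<in>Fam. Miss I)"
    using bad_sub finFam finMiss by (intro card_mono finite_UN_I) auto
  also have "\<dots> \<le> (\<Sum>I\<in>Fam. card (Miss I))" by (rule card_UN_le[OF finFam])
  also have "\<dots> \<le> of_nat (card Fam) * (\<Prod>i\<in>{1..\<rho>}. card (S i) - 1)"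
    by (rule sum_bounded_above) (rule missc)
  finally have badc: "card (P - Good) \<le> card Fam * (\<Prod>i\<in>{1..\<rho>}. card (S i) - 1)" by simp
  have prodq: "real (\<Prod>i\<in>{1..\<rho>}. card (S i) - 1) \<le> real (card P) * q ^ \<rho>"
  proof -
    have "real (\<Prod>i\<in>{1..\<rho>}. card (S i) - 1) = (\<Prod>i\<in>{1..\<rho>}. real (card (S i) - 1))" by simp
    also have "\<dots> \<le> (\<Prod>i\<in>{1..\<rho>}. real (card (S i)) * q)"
    proof (rule prod_mono)
      fix i assume i: "i \<in> {1..\<rho>}"
      have c6: "card (S i) < 6 * k" using ep[OF i] by simp
      show "0 \<le> real (card (S i) - 1) \<and> real (card (S i) - 1) \<le> real (card (S i)) * q"
      proof (cases "card (S i) = 0")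
        case True thus ?thesis by simp
      next
        case False
        have "real (card (S i)) / (6 * real k) \<le> 1" using c6 k1 by simp
        hence "real (card (S i)) - 1 \<le> real (card (S i)) * q"
          unfolding q_def by (simp add: algebra_simps)
        thus ?thesis using False by (simp add: of_nat_diff)
      qed
    qed
    also have "\<dots> = (\<Prod>i\<in>{1..\<rho>}. real (card (S i))) * q ^ \<rho>"
      by (simp add: prod.distrib)
    also have "\<dots> = real (card P) * q ^ \<rho>" using cardP by simp
    finally show ?thesis .
  qed
  have q0: "0 \<le> q" using k1 q_def by simp
  have "real (card (P - Good)) \<le> real (card Fam) * real (\<Prod>i\<in>{1..\<rho>}. card (S i) - 1)"
    using badc by (metis of_nat_le_iff of_nat_mult)
  also have "\<dots> \<le> real (\<rho> * (6 * k - 1)) * (real (card P) * q ^ \<rho>)"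
  proof (rule mult_mono)
    show "real (card Fam) \<le> real (\<rho> * (6 * k - 1))" using cFam by (simp only: of_nat_le_iff)
  qed (use prodq in \<open>auto intro: prod_nonneg\<close>)
  also have "\<dots> = real (card P) * (real \<rho> * (6 * real k - 1) * q ^ \<rho>)"
    using k1 by (simp add: of_nat_diff)
  also have "\<dots> \<le> real (card P) * (11 / 12)"
    using analytic[OF k1 rho_def] q_def by (intro mult_left_mono) auto
  finally have bad: "real (card (P - Good)) \<le> real (card P) * (11 / 12)" .
  have GP: "Good \<subseteq> P" using Good_def by blast
  have "card (P - Good) = card P - card Good" using GP finP by (simp add: card_Diff_subset finite_subset)
  moreover have "card Good \<le> card P" using GP finP by (simp add: card_mono)
  ultimately have "real (card Good) = real (card P) - real (card (P - Good))" by simp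
  hence "real (card Good) \<ge> 1 / 12 * real (card P)" using bad by simp
  thus ?thesis unfolding Good_def P_def Fam_def M_def D_def .
qed

end
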